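(* Let $a,b,c,n,m,p,q,r$ be positive integers with $n>1$ and $r>1$, and let $$M=\begin{pmatrix} 1 & a & b\\ c & n & m\\ p & q & r\end{pmatrix}.$$ If $\mathrm{Cat}(M)\neq\emptyset$, then $n\geq ac+1$, $r\geq bp+1$, $m\geq bc$ and $q\geq ap$.
   Context: For an $n\times n$ matrix $M=(m_{ij})$ with entries in the natural numbers, $\mathrm{Cat}(M)$ denotes the collection of categories $A$ with exactly $n$ distinct objects $x_1,\dots,x_n$ such that $|A(x_i,x_j)|=m_{ij}$ for all $i,j$, where $A(x_i,x_j)$ is the set of morphisms from $x_i$ to $x_j$. *)

theory Defs
  imports Main
begin

text \<open>A (small) category with objects 0,...,n-1, in hom-set presentation:
  Hom i j is the set of morphisms from object i to object j,
  cmp i j k g f is the composite g o f of f : i -> j and g : j -> k,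
  ident i is the identity of object i.\<close>

definition category_on ::
  "nat \<Rightarrow> (nat \<Rightarrow> nat \<Rightarrow> 'm set) \<Rightarrow> (nat \<Rightarrow> nat \<Rightarrow> nat \<Rightarrow> 'm \<Rightarrow> 'm \<Rightarrow> 'm)
    \<Rightarrow> (nat \<Rightarrow> 'm) \<Rightarrow> bool" where
  "category_on n Hom cmp ident \<longleftrightarrow>
     (\<forall>i<n. ident i \<in> Hom i i) \<and>
     (\<forall>i<n. \<forall>j<n. \<forall>k<n. \<forall>f\<in>Hom i j. \<forall>g\<in>Hom j k. cmp i j k g f \<in> Hom i k) \<and>
     (\<forall>i<n. \<forall>j<n. \<forall>f\<in>Hom i j. cmp i j j (ident j) f = f) \<and>
     (\<forall>i<n. \<forall>j<n. \<forall>f\<in>Hom i j. cmp i i j f (ident i) = f) \<and>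
     (\<forall>i<n. \<forall>j<n. \<forall>k<n. \<forall>l<n. \<forall>f\<in>Hom i j. \<forall>g\<in>Hom j k. \<forall>h\<in>Hom k l.
        cmp i k l h (cmp i j k g f) = cmp i j l (cmp j k l h g) f)"

definition in_Cat ::
  "nat \<Rightarrow> (nat \<Rightarrow> nat \<Rightarrow> nat) \<Rightarrow> (nat \<Rightarrow> nat \<Rightarrow> 'm set) \<Rightarrow> (nat \<Rightarrow> nat \<Rightarrow> nat \<Rightarrow> 'm \<Rightarrow> 'm \<Rightarrow> 'm)
    \<Rightarrow> (nat \<Rightarrow> 'm) \<Rightarrow> bool" where
  "in_Cat n M Hom cmp ident \<longleftrightarrow>
     category_on n Hom cmp ident \<and> (\<forall>i<n. \<forall>j<n. card (Hom i j) = M i j)"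

end

theory Submission
  imports Defs
begin

lemma cat_cl: "category_on N Hom cmp ident \<Longrightarrow> i<N \<Longrightarrow> j<N \<Longrightarrow> k<N \<Longrightarrow> f\<in>Hom i j \<Longrightarrow> g\<in>Hom j k \<Longrightarrow> cmp i j k g f \<in> Hom i k"
  unfolding category_on_def by simp
lemma cat_id: "category_on N Hom cmp ident \<Longrightarrow> i<N \<Longrightarrow> ident i \<in> Hom i i"
  unfolding category_on_def by simp
lemma cat_lid: "category_on N Hom cmp ident \<Longrightarrow> i<N \<Longrightarrow> j<N \<Longrightarrow> f\<in>Hom i j \<Longrightarrow> cmp i j j (ident j) f = f"
  unfolding category_on_def by simp
lemma cat_rid: "category_on N Hom cmp ident \<Longrightarrow> i<N \<Longrightarrow> j<N \<Longrightarrow> f\<in>Hom i j \<Longrightarrow> cmp i i j f (ident i) = f"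
  unfolding category_on_def by simp
lemma cat_as: "category_on N Hom cmp ident \<Longrightarrow> i<N \<Longrightarrow> j<N \<Longrightarrow> k<N \<Longrightarrow> l<N \<Longrightarrow> f\<in>Hom i j \<Longrightarrow> g\<in>Hom j k \<Longrightarrow> h\<in>Hom k l \<Longrightarrow>
        cmp i k l h (cmp i j k g f) = cmp i j l (cmp j k l h g) f"
  unfolding category_on_def by simp

lemma cat_inj:
  assumes cat: "category_on 3 Hom cmp ident"
    and h00: "Hom 0 0 = {ident 0}"
    and jk: "j < 3" "k < 3"
    and u: "u \<in> Hom 0 j" and v: "v \<in> Hom k 0"
  shows "inj_on (\<lambda>(g,f). cmp j 0 k f g) (Hom j 0 \<times> Hom 0 k)"
proof (rule inj_onI, clarify)
  note C = cat[unfolded category_on_def]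
  note cl = cat_cl[OF cat]
  note lid = cat_lid[OF cat]
  note rid = cat_rid[OF cat]
  note as = cat_as[OF cat]
  fix g f g' f'
  assume g: "g \<in> Hom j 0" and f: "f \<in> Hom 0 k" and g': "g' \<in> Hom j 0" and f': "f' \<in> Hom 0 k"
    and eq: "cmp j 0 k f g = cmp j 0 k f' g'"
  have rg: "cmp j k 0 v (cmp j 0 k f g) = g" if "g \<in> Hom j 0" "f \<in> Hom 0 k" for g f
  proof -
    have "cmp j k 0 v (cmp j 0 k f g) = cmp j 0 0 (cmp 0 k 0 v f) g"
      using as[of j 0 k 0 g f v] jk that v by simp
    also have "cmp 0 k 0 v f = ident 0" using cl[of 0 k 0 f v] jk that v h00 by auto
    also have "cmp j 0 0 (ident 0) g = g" using lid[of j 0 g] jk that by simp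
    finally show ?thesis .
  qed
  have rf: "cmp 0 j k (cmp j 0 k f g) u = f" if "g \<in> Hom j 0" "f \<in> Hom 0 k" for g f
  proof -
    have "cmp 0 j k (cmp j 0 k f g) u = cmp 0 0 k f (cmp 0 j 0 g u)"
      using as[of 0 j 0 k u g f] jk that u by simp
    also have "cmp 0 j 0 g u = ident 0" using cl[of 0 j 0 u g] jk that u h00 by auto
    also have "cmp 0 0 k f (ident 0) = f" using rid[of 0 k f] jk that by simp
    finally show ?thesis .
  qed
  show "g = g' \<and> f = f'"
    using rg[OF g f] rg[OF g' f'] rf[OF g f] rf[OF g' f'] eq by metis
qed

lemma cat_notid:
  assumes cat: "category_on 3 Hom cmp ident"
    and h00: "Hom 0 0 = {ident 0}"
    and jk: "j < 3"
    and g: "g \<in> Hom j 0" and f: "f \<in> Hom 0 j"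
    and e: "cmp j 0 j f g = ident j"
    and h: "h \<in> Hom j j"
  shows "h = ident j"
proof -
  note C = cat[unfolded category_on_def]
  note cl = cat_cl[OF cat]
  note lid = cat_lid[OF cat]
  note rid = cat_rid[OF cat]
  note as = cat_as[OF cat]
  define x where "x = cmp 0 j j h f"
  have x: "x \<in> Hom 0 j" unfolding x_def using cl[of 0 j j f h] jk f h by simp
  have y: "cmp 0 j 0 g x = ident 0" using cl[of 0 j 0 x g] jk x g h00 by auto
  have "h = cmp j j j h (ident j)" using rid[of j j h] jk h by simp
  also have "\<dots> = cmp j 0 j x g" unfolding x_def using as[of j 0 j j g f h] e jk g f h by simp
  also have "\<dots> = cmp j j j (ident j) (cmp j 0 j x g)" using lid[of j j "cmp j 0 j x g"] cl[of j 0 j g x] jk g x by simp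
  also have "\<dots> = cmp j 0 j (cmp 0 j j (ident j) x) g"
    using as[of j 0 j j g x "ident j"] cat_id[OF cat jk] jk g x by simp
  also have "\<dots> = cmp j 0 j (cmp 0 j j (cmp j 0 j f g) x) g" using e by simp
  also have "cmp 0 j j (cmp j 0 j f g) x = cmp 0 0 j f (cmp 0 j 0 g x)"
    using as[of 0 j 0 j x g f] jk x g f by simp
  also have "\<dots> = f" using y rid[of 0 j f] jk f by simp
  finally show ?thesis using e by simp
qed

lemma cat_bound:
  assumes cat: "category_on 3 Hom cmp ident"
    and h00: "Hom 0 0 = {ident 0}"
    and jk: "j < 3" "k < 3"
    and u: "u \<in> Hom 0 j" and v: "v \<in> Hom k 0"
    and fin: "finite (Hom j k)"
  shows "card (Hom j 0) * card (Hom 0 k) \<le> card (Hom j k)"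
proof -
  note cl = cat_cl[OF cat]
  have "card (Hom j 0) * card (Hom 0 k) = card (Hom j 0 \<times> Hom 0 k)" by (simp add: card_cartesian_product)
  also have "\<dots> \<le> card (Hom j k)"
    apply (rule card_inj_on_le[OF cat_inj[OF cat h00 jk u v] _ fin])
    using cl[of j 0 k] jk by auto
  finally show ?thesis .
qed

lemma cat_bound_strict:
  assumes cat: "category_on 3 Hom cmp ident"
    and h00: "Hom 0 0 = {ident 0}"
    and jk: "j < 3"
    and fin: "finite (Hom j j)" and two: "card (Hom j j) > 1"
  shows "card (Hom j 0) * card (Hom 0 j) + 1 \<le> card (Hom j j)"
proof (cases "Hom j 0 = {} \<or> Hom 0 j = {}")
  case True then show ?thesis using two by auto
next
  case False
  then obtain u v where u: "u \<in> Hom 0 j" and v: "v \<in> Hom j 0" by blast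
  note cl = cat_cl[OF cat]
  have idm: "ident j \<in> Hom j j" using cat_id[OF cat jk] .
  let ?F = "(\<lambda>(g,f). cmp j 0 j f g)"
  have nid: "ident j \<notin> ?F ` (Hom j 0 \<times> Hom 0 j)"
  proof
    assume "ident j \<in> ?F ` (Hom j 0 \<times> Hom 0 j)"
    then obtain g f where g: "g \<in> Hom j 0" and f: "f \<in> Hom 0 j" and e: "cmp j 0 j f g = ident j" by auto
    have "\<forall>h\<in>Hom j j. h = ident j" using cat_notid[OF cat h00 jk g f e] by blast
    hence "Hom j j \<subseteq> {ident j}" by blast
    hence "card (Hom j j) \<le> card {ident j}" by (intro card_mono) simp_all
    hence "card (Hom j j) \<le> 1" by simp
    thus False using two by simp
  qed
  have sub: "?F ` (Hom j 0 \<times> Hom 0 j) \<subseteq> Hom j j" using cl[of j 0 j] jk by auto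
  have fimg: "finite (?F ` (Hom j 0 \<times> Hom 0 j))" by (rule finite_subset[OF sub fin])
  have ci: "card (insert (ident j) (?F ` (Hom j 0 \<times> Hom 0 j))) = card (?F ` (Hom j 0 \<times> Hom 0 j)) + 1"
    using card_insert_disjoint[OF fimg nid] by simp
  have "card (Hom j 0) * card (Hom 0 j) = card (Hom j 0 \<times> Hom 0 j)" by (simp add: card_cartesian_product)
  also have "\<dots> = card (?F ` (Hom j 0 \<times> Hom 0 j))"
    using card_image[OF cat_inj[OF cat h00 jk jk u v]] by simp
  finally have "card (Hom j 0) * card (Hom 0 j) + 1 = card (insert (ident j) (?F ` (Hom j 0 \<times> Hom 0 j)))"
    using ci by simp
  also have "\<dots> \<le> card (Hom j j)"
    apply (rule card_mono[OF fin]) using idm sub by blast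
  finally show ?thesis .
qed

theorem mainTheorem3:
  fixes a b c n m p q r :: nat
    and Hom :: "nat \<Rightarrow> nat \<Rightarrow> 'm set"
    and cmp :: "nat \<Rightarrow> nat \<Rightarrow> nat \<Rightarrow> 'm \<Rightarrow> 'm \<Rightarrow> 'm"
    and ident :: "nat \<Rightarrow> 'm"
  assumes "a > 0" "b > 0" "c > 0" "n > 1" "m > 0" "p > 0" "q > 0" "r > 1"
    and "in_Cat 3 (\<lambda>i j. [[1, a, b], [c, n, m], [p, q, r]] ! i ! j) Hom cmp ident"
  shows "n \<ge> a * c + 1 \<and> r \<ge> b * p + 1 \<and> m \<ge> b * c \<and> q \<ge> a * p"
proof -
  have cat: "category_on 3 Hom cmp ident" and cd: "\<forall>i<3. \<forall>j<3. card (Hom i j) = [[1, a, b], [c, n, m], [p, q, r]] ! i ! j"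
    using assms(9) unfolding in_Cat_def by auto
  have c00: "card (Hom 0 0) = 1" and c01: "card (Hom 0 1) = a" and c02: "card (Hom 0 2) = b"
   and c10: "card (Hom 1 0) = c" and c11: "card (Hom 1 1) = n" and c12: "card (Hom 1 2) = m"
   and c20: "card (Hom 2 0) = p" and c21: "card (Hom 2 1) = q" and c22: "card (Hom 2 2) = r"
    using cd by (auto simp: numeral_eq_Suc)
  have id0: "ident 0 \<in> Hom 0 0" using cat_id[OF cat] by simp
  have h00: "Hom 0 0 = {ident 0}" using c00 id0 by (metis card_1_singletonE singletonD)
  have ne: "\<And>i j. card (Hom i j) > 0 \<Longrightarrow> \<exists>x. x \<in> Hom i j \<and> finite (Hom i j)"
    by (metis card_gt_0_iff ex_in_conv)
  obtain u1 where u1: "u1 \<in> Hom 0 1" using ne[of 0 1] c01 assms by auto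
  obtain u2 where u2: "u2 \<in> Hom 0 2" using ne[of 0 2] c02 assms by auto
  obtain v1 where v1: "v1 \<in> Hom 1 0" using ne[of 1 0] c10 assms by auto
  obtain v2 where v2: "v2 \<in> Hom 2 0" using ne[of 2 0] c20 assms by auto
  have f11: "finite (Hom 1 1)" and f22: "finite (Hom 2 2)" and f12: "finite (Hom 1 2)" and f21: "finite (Hom 2 1)"
    using ne[of 1 1] ne[of 2 2] ne[of 1 2] ne[of 2 1] c11 c22 c12 c21 assms by auto
  have 1: "n \<ge> a * c + 1" using cat_bound_strict[OF cat h00, of 1] f11 c11 c10 c01 assms
    by (simp add: mult.commute)
  have 2: "r \<ge> b * p + 1" using cat_bound_strict[OF cat h00, of 2] f22 c22 c20 c02 assms
    by (simp add: mult.commute)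
  have 3: "m \<ge> b * c" using cat_bound[OF cat h00, of 1 2 u1 v2] f12 c12 c10 c02 u1 v2
    by (simp add: mult.commute)
  have 4: "q \<ge> a * p" using cat_bound[OF cat h00, of 2 1 u2 v1] f21 c21 c20 c01 u2 v1
    by (simp add: mult.commute)
  show ?thesis using 1 2 3 4 by simp
qed

end
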